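(* Let $\mathcal X$ be finite with $N=|\mathcal X|\ge2$, $0<c<1/N$ and $\varepsilon\ge0$. Then $$\eta_{\mathrm{TV}}(\varepsilon,c)=\sup_{K\in\mathcal M(\varepsilon,c)}\eta^{\mathcal Q_{\mathcal X}(c)}_{\mathrm{TV}}(K).$$
   Context: A kernel $K$ is a row-stochastic matrix with entries $K_{Y|X=x}(y)$, $(K\circ P_X)(y)=\sum_x K_{Y|X=x}(y)P_X(x)$. PML: $\ell_{K\times P_X}(X\to y)=\log\frac{\max_x K_{Y|X=x}(y)}{(K\circ P_X)(y)}$ for full-support $P_X$ and $(K\circ P_X)(y)>0$. $\mathcal Q_{\mathcal X}(c)=\{P_X\in\mathcal P(\mathcal X):\min_x P_X(x)\ge c\}$; $C(K,\mathcal P)=\sup_{P_X\in\mathcal P}\sup_{y:(K\circ P_X)(y)>0}\ell_{K\times P_X}(X\to y)$; $\mathcal M(\varepsilon,c)$ is the set of kernels from $\mathcal X$ to any finite output set with $C(K,\mathcal Q_{\mathcal X}(c))\le\varepsilon$. For a set $\mathcal P\subseteq\mathcal P(\mathcal X)$, $\eta^{\mathcal P}_{\mathrm{TV}}(K)=\sup_{P_X,Q_X\in\mathcal P,\,P_X\ne Q_X}\frac{\mathrm{TV}(K\circ P_X\|K\circ Q_X)}{\mathrm{TV}(P_X\|Q_X)}$, and $\eta_{\mathrm{TV}}(K)=\eta^{\mathcal P(\mathcal X)}_{\mathrm{TV}}(K)$, where $\mathrm{TV}(P\|Q)=\frac12\sum|P-Q|$. Finally $\eta_{\mathrm{TV}}(\varepsilon,c)=\sup_{K\in\mathcal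 M(\varepsilon,c)}\eta_{\mathrm{TV}}(K)$. *)

theory Defs
  imports Complex_Main
begin

definition dists :: "('a::finite \<Rightarrow> real) set" where
  "dists = {P. (\<forall>x. P x \<ge> 0) \<and> (\<Sum>x\<in>UNIV. P x) = 1}"

definition Qc :: "real \<Rightarrow> ('a::finite \<Rightarrow> real) set" where
  "Qc c = {P \<in> dists. \<forall>x. P x \<ge> c}"

definition is_kernel :: "nat \<Rightarrow> ('a::finite \<Rightarrow> nat \<Rightarrow> real) \<Rightarrow> bool" where
  "is_kernel m K \<longleftrightarrow> (\<forall>x. (\<forall>y<m. K x y \<ge> 0) \<and> (\<forall>y\<ge>m. K x y = 0) \<and> (\<Sum>y<m. K x y) = 1)"

definition push :: "('a::finite \<Rightarrow> nat \<Rightarrow> real) \<Rightarrow> ('a \<Rightarrow> real) \<Rightarrow> nat \<Rightarrow> real" where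
  "push K P y = (\<Sum>x\<in>UNIV. K x y * P x)"

definition pml :: "('a::finite \<Rightarrow> nat \<Rightarrow> real) \<Rightarrow> ('a \<Rightarrow> real) \<Rightarrow> nat \<Rightarrow> real" where
  "pml K P y = ln (Max (range (\<lambda>x. K x y)) / push K P y)"

definition capC :: "nat \<Rightarrow> ('a::finite \<Rightarrow> nat \<Rightarrow> real) \<Rightarrow> ('a \<Rightarrow> real) set \<Rightarrow> real" where
  "capC m K PP = Sup {pml K P y | P y. P \<in> PP \<and> y < m \<and> push K P y > 0}"

definition Mset :: "real \<Rightarrow> real \<Rightarrow> (nat \<times> ('a::finite \<Rightarrow> nat \<Rightarrow> real)) set" where
  "Mset eps c = {(m, K). is_kernel m K \<and> capC m K (Qc c) \<le> eps}"

definition TV_in :: "('a::finite \<Rightarrow> real) \<Rightarrow> ('a \<Rightarrow> real) \<Rightarrow> real" where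
  "TV_in P Q = (1/2) * (\<Sum>x\<in>UNIV. \<bar>P x - Q x\<bar>)"

definition TV_out :: "nat \<Rightarrow> (nat \<Rightarrow> real) \<Rightarrow> (nat \<Rightarrow> real) \<Rightarrow> real" where
  "TV_out m P Q = (1/2) * (\<Sum>y<m. \<bar>P y - Q y\<bar>)"

definition eta_TV_on :: "nat \<Rightarrow> ('a::finite \<Rightarrow> nat \<Rightarrow> real) \<Rightarrow> ('a \<Rightarrow> real) set \<Rightarrow> real" where
  "eta_TV_on m K PP = Sup {TV_out m (push K P) (push K Q) / TV_in P Q | P Q. P \<in> PP \<and> Q \<in> PP \<and> P \<noteq> Q}"

definition eta_TV :: "nat \<Rightarrow> ('a::finite \<Rightarrow> nat \<Rightarrow> real) \<Rightarrow> real" where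
  "eta_TV m K = eta_TV_on m K dists"

definition eta_TV_eps_c :: "real \<Rightarrow> real \<Rightarrow> 'a::finite itself \<Rightarrow> real" where
  "eta_TV_eps_c eps c (_ :: 'a itself) = Sup ((\<lambda>(m, K). eta_TV m K) ` (Mset eps c :: (nat \<times> ('a \<Rightarrow> nat \<Rightarrow> real)) set))"

end

theory Submission
  imports Defs
begin

lemma ratio_set_eq:
  fixes c :: real and K :: "'a::finite \<Rightarrow> nat \<Rightarrow> real"
  assumes "0 < c" and "c < 1 / real (card (UNIV :: 'a set))"
  shows "eta_TV_on m K (Qc c) = eta_TV_on m K dists"
proof -
  define N where "N = real (card (UNIV :: 'a set))"
  have N0: "N > 0" unfolding N_def by (simp add: finite_UNIV_card_ge_0)
  define s where "s = 1 - c * N"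
  have cN: "c * N < 1" using assms(2) N0 unfolding N_def[symmetric] by (simp add: field_simps)
  have s0: "s > 0" using cN unfolding s_def by simp
  have s1: "(1 - s) / N = c" unfolding s_def using N0 by simp
  have sub: "Qc c \<subseteq> (dists :: ('a \<Rightarrow> real) set)" unfolding Qc_def by auto
  let ?R = "\<lambda>PP. {TV_out m (push K P) (push K Q) / TV_in P Q | P Q. P \<in> PP \<and> Q \<in> PP \<and> P \<noteq> Q}"
  have "?R (Qc c) = ?R dists"
  proof
    show "?R (Qc c) \<subseteq> ?R dists" using sub by blast
  next
    show "?R dists \<subseteq> ?R (Qc c)"
    proof
      fix r assume "r \<in> ?R dists"
      then obtain P Q where PQ: "P \<in> dists" "Q \<in> dists" "P \<noteq> Q"
        and r: "r = TV_out m (push K P) (push K Q) / TV_in P Q" by blast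
      define f where "f = (\<lambda>(D::'a \<Rightarrow> real) x. (1 - s) / N + s * D x)"
      have inQ: "f D \<in> Qc c" if "D \<in> dists" for D
      proof -
        have nn: "\<forall>x. D x \<ge> 0" and sm: "(\<Sum>x\<in>UNIV. D x) = 1" using that unfolding dists_def by auto
        have ge: "f D x \<ge> c" for x unfolding f_def s1 using nn s0 by simp
        have "(\<Sum>x\<in>UNIV. f D x) = (\<Sum>x\<in>(UNIV::'a set). c) + s * (\<Sum>x\<in>UNIV. D x)"
          unfolding f_def s1 by (simp add: sum.distrib sum_distrib_left)
        also have "\<dots> = c * N + s" using sm unfolding N_def by simp
        also have "\<dots> = 1" unfolding s_def by simp
        finally show ?thesis using ge assms(1) unfolding Qc_def dists_def
          by (auto intro: order_trans[of 0 c])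
      qed
      have pushf: "push K (f D) y = c * (\<Sum>x\<in>UNIV. K x y) + s * push K D y" for D y
      proof -
        have "push K (f D) y = (\<Sum>x\<in>UNIV. c * K x y + s * (K x y * D x))"
          unfolding push_def f_def s1 by (rule sum.cong) (auto simp: algebra_simps)
        also have "\<dots> = c * (\<Sum>x\<in>UNIV. K x y) + s * push K D y"
          unfolding push_def by (simp add: sum.distrib sum_distrib_left)
        finally show ?thesis .
      qed
      have tvo: "TV_out m (push K (f P)) (push K (f Q)) = s * TV_out m (push K P) (push K Q)"
      proof -
        have "\<bar>push K (f P) y - push K (f Q) y\<bar> = s * \<bar>push K P y - push K Q y\<bar>" for y
        proof -
          have "push K (f P) y - push K (f Q) y = s * (push K P y - push K Q y)"
            unfolding pushf by (simp add: right_diff_distrib)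
          then show ?thesis using s0 by (simp add: abs_mult)
        qed
        then show ?thesis unfolding TV_out_def by (simp add: sum_distrib_left)
      qed
      have tvi: "TV_in (f P) (f Q) = s * TV_in P Q"
      proof -
        have "\<bar>f P x - f Q x\<bar> = s * \<bar>P x - Q x\<bar>" for x
        proof -
          have "f P x - f Q x = s * (P x - Q x)" unfolding f_def by (simp add: right_diff_distrib)
          then show ?thesis using s0 by (simp add: abs_mult)
        qed
        then show ?thesis unfolding TV_in_def by (simp add: sum_distrib_left)
      qed
      have ne: "f P \<noteq> f Q"
      proof
        assume "f P = f Q"
        then have "s * P x = s * Q x" for x unfolding f_def by (metis add_left_cancel)
        then have "P x = Q x" for x using s0 by simp
        then show False using PQ(3) by blast
      qed
      have "r = TV_out m (push K (f P)) (push K (f Q)) / TV_in (f P) (f Q)"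
        unfolding r tvo tvi using s0 by simp
      then show "r \<in> ?R (Qc c)" using inQ PQ ne by blast
    qed
  qed
  then show ?thesis unfolding eta_TV_on_def by simp
qed

theorem lemma2:
  fixes eps c :: real
  assumes "card (UNIV :: 'a::finite set) \<ge> 2"
    and "0 < c" and "c < 1 / real (card (UNIV :: 'a set))"
    and "eps \<ge> 0"
  shows "eta_TV_eps_c eps c TYPE('a)
         = Sup ((\<lambda>(m, K). eta_TV_on m K (Qc c)) ` (Mset eps c :: (nat \<times> ('a \<Rightarrow> nat \<Rightarrow> real)) set))"
  unfolding eta_TV_eps_c_def eta_TV_def
  using ratio_set_eq[OF assms(2) assms(3)] by (simp add: case_prod_beta)

end
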